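(* For every graph $G$, $mw(G) \leq pw(G)+1$, where $mw(G)$ is the matching width and $pw(G)$ the pathwidth of $G$.
   Context: For a permutation $SV=(v_1,\dots,v_n)$ of $V(G)$ and $1\le i\le n$, let $V_i=\{v_1,\dots,v_i\}$ and let $G_i$ be the graph on $V(G)$ whose edges are the edges of $G$ with one end in $V_i$ and the other in $V(G)\setminus V_i$. The matching width of $SV$ is $\max_i \nu(G_i)$, where $\nu$ denotes maximum matching size, and the matching width $mw(G)$ is the minimum of this quantity over all permutations $SV$ of $V(G)$. Pathwidth is the standard notion (minimum over path decompositions of the maximum bag size minus one). *)

theory Defs
  imports Main
begin

definition graph :: "'a set \<Rightarrow> 'a set set \<Rightarrow> bool" where
  "graph V E \<longleftrightarrow> finite V \<and> (\<forall>e\<in>E. \<exists>u v. e = {u, v} \<and> u \<noteq> v \<and> u \<in> V \<and> v \<in> V)"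

definition matching :: "'a set set \<Rightarrow> 'a set set \<Rightarrow> bool" where
  "matching E M \<longleftrightarrow> M \<subseteq> E \<and> (\<forall>e\<in>M. \<forall>f\<in>M. e \<noteq> f \<longrightarrow> e \<inter> f = {})"

definition nu :: "'a set set \<Rightarrow> nat" where
  "nu E = Max {card M | M. matching E M}"

definition cut_edges :: "'a set set \<Rightarrow> 'a set \<Rightarrow> 'a set set" where
  "cut_edges E S = {e \<in> E. \<exists>u v. e = {u, v} \<and> u \<in> S \<and> v \<notin> S}"

text \<open>A permutation of V is a distinct list enumerating V; V_i = set (take i vs).\<close>
definition vertex_ordering :: "'a set \<Rightarrow> 'a list \<Rightarrow> bool" where
  "vertex_ordering V vs \<longleftrightarrow> distinct vs \<and> set vs = V"

definition mw_of_ordering :: "'a set set \<Rightarrow> 'a list \<Rightarrow> nat" where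
  "mw_of_ordering E vs = Max {nu (cut_edges E (set (take i vs))) | i. i \<le> length vs}"

definition matching_width :: "'a set \<Rightarrow> 'a set set \<Rightarrow> nat" where
  "matching_width V E = (LEAST k. \<exists>vs. vertex_ordering V vs \<and> mw_of_ordering E vs = k)"

definition path_decomposition :: "'a set \<Rightarrow> 'a set set \<Rightarrow> 'a set list \<Rightarrow> bool" where
  "path_decomposition V E Bs \<longleftrightarrow>
     Bs \<noteq> [] \<and> (\<forall>B\<in>set Bs. B \<subseteq> V) \<and>
     (\<forall>v\<in>V. \<exists>B\<in>set Bs. v \<in> B) \<and>
     (\<forall>e\<in>E. \<exists>B\<in>set Bs. e \<subseteq> B) \<and>
     (\<forall>i j k. i \<le> j \<and> j \<le> k \<and> k < length Bs \<longrightarrow> Bs ! i \<inter> Bs ! k \<subseteq> Bs ! j)"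

definition pd_width :: "'a set list \<Rightarrow> int" where
  "pd_width Bs = int (Max (card ` set Bs)) - 1"

definition pathwidth :: "'a set \<Rightarrow> 'a set set \<Rightarrow> int" where
  "pathwidth V E = (LEAST k. \<exists>Bs. path_decomposition V E Bs \<and> pd_width Bs = k)"

end

theory Submission
  imports Defs
begin

lemma pd_cover: "path_decomposition V E Bs \<Longrightarrow> \<forall>v\<in>V. \<exists>B\<in>set Bs. v \<in> B"
  unfolding path_decomposition_def by (rule conjunct1[OF conjunct2[OF conjunct2]])
lemma pd_sub: "path_decomposition V E Bs \<Longrightarrow> \<forall>B\<in>set Bs. B \<subseteq> V"
  unfolding path_decomposition_def by (rule conjunct1[OF conjunct2])
lemma pd_edge: "path_decomposition V E Bs \<Longrightarrow> \<forall>e\<in>E. \<exists>B\<in>set Bs. e \<subseteq> B"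
  unfolding path_decomposition_def by (rule conjunct1[OF conjunct2[OF conjunct2[OF conjunct2]]])
lemma pd_interp: "path_decomposition V E Bs \<Longrightarrow>
   \<forall>i j k. i \<le> j \<and> j \<le> k \<and> k < length Bs \<longrightarrow> Bs ! i \<inter> Bs ! k \<subseteq> Bs ! j"
  unfolding path_decomposition_def by (rule conjunct2[OF conjunct2[OF conjunct2[OF conjunct2]]])
lemma graph_fin: "graph V E \<Longrightarrow> finite V"
  unfolding graph_def by (rule conjunct1)
lemma graph_edge: "graph V E \<Longrightarrow> e \<in> E \<Longrightarrow> \<exists>u v. e = {u, v} \<and> u \<noteq> v \<and> u \<in> V \<and> v \<in> V"
  unfolding graph_def by (drule conjunct2) (erule bspec)
lemma graph_edge_sub: "graph V E \<Longrightarrow> e \<in> E \<Longrightarrow> e \<subseteq> V"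
  by (drule (1) graph_edge) auto

definition fidx :: "'a set list \<Rightarrow> 'a \<Rightarrow> nat" where
  "fidx Bs v = (LEAST j. j < length Bs \<and> v \<in> Bs ! j)"

lemma fidx_props:
  assumes "path_decomposition V E Bs" "v \<in> V"
  shows "fidx Bs v < length Bs \<and> v \<in> Bs ! fidx Bs v"
proof -
  from pd_cover[OF assms(1)] assms(2) obtain B where "B \<in> set Bs" "v \<in> B" by blast
  then obtain j where "j < length Bs" "v \<in> Bs ! j" by (metis in_set_conv_nth)
  then show ?thesis unfolding fidx_def by (rule LeastI[where P="\<lambda>j. j < length Bs \<and> v \<in> Bs ! j", OF conjI])
qed

lemma fidx_le:
  assumes "j < length Bs" "v \<in> Bs ! j"
  shows "fidx Bs v \<le> j"
  unfolding fidx_def using assms by (intro Least_le) auto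

lemma graph_finite_E: "graph V E \<Longrightarrow> finite E"
proof -
  assume g: "graph V E"
  have "E \<subseteq> Pow V" using graph_edge_sub[OF g] by blast
  moreover have "finite V" using graph_fin[OF g] .
  ultimately show "finite E" by (meson finite_Pow_iff finite_subset)
qed

lemma nu_le:
  assumes "finite E" "\<And>M. matching E M \<Longrightarrow> card M \<le> K"
  shows "nu E \<le> K"
proof -
  have eq: "{card M | M. matching E M} = card ` {M. matching E M}" by blast
  have "{M. matching E M} \<subseteq> Pow E" unfolding matching_def by blast
  then have fin: "finite {M. matching E M}" using assms(1) by (meson finite_Pow_iff finite_subset)
  have ne: "{} \<in> {M. matching E M}" unfolding matching_def by blast
  show ?thesis unfolding nu_def eq using fin ne assms(2)
    by (subst Max_le_iff) auto
qed

lemma cut_bound: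
  assumes g: "graph V E" and pd: "path_decomposition V E Bs"
    and j: "j < length Bs"
    and lo: "\<forall>u\<in>S. fidx Bs u \<le> j"
    and hi: "\<forall>w\<in>V - S. j \<le> fidx Bs w"
    and m: "matching (cut_edges E S) M"
  shows "card M \<le> card (Bs ! j)"
proof -
  have key: "\<exists>u. u \<in> e \<and> u \<in> S \<and> u \<in> Bs ! j" if eM: "e \<in> M" for e
  proof -
    from eM m have "e \<in> cut_edges E S" unfolding matching_def by blast
    then obtain u w where e: "e = {u, w}" "u \<in> S" "w \<notin> S" "e \<in> E"
      unfolding cut_edges_def by blast
    have "u \<in> e" "w \<in> e" using e(1) by auto
    then have uwV: "u \<in> V" "w \<in> V" using graph_edge_sub[OF g e(4)] by auto
    from pd_edge[OF pd] e(4) obtain B where "B \<in> set Bs" "e \<subseteq> B" by blast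
    then obtain t where t: "t < length Bs" "e \<subseteq> Bs ! t" by (metis in_set_conv_nth)
    have "fidx Bs w \<le> t" using t e(1) by (intro fidx_le) auto
    moreover have "j \<le> fidx Bs w" using hi uwV e(3) by blast
    moreover have "fidx Bs u \<le> j" using lo e(2) by blast
    moreover have "u \<in> Bs ! fidx Bs u" using fidx_props[OF pd uwV(1)] by blast
    moreover have "u \<in> Bs ! t" using t e(1) by auto
    ultimately have "u \<in> Bs ! fidx Bs u \<inter> Bs ! t" "fidx Bs u \<le> j" "j \<le> t"
      by auto
    moreover have "\<forall>i j k. i \<le> j \<and> j \<le> k \<and> k < length Bs \<longrightarrow> Bs ! i \<inter> Bs ! k \<subseteq> Bs ! j"
      using pd_interp[OF pd] .
    ultimately have "u \<in> Bs ! j" using t(1) by blast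
    then show ?thesis using e by auto
  qed
  define g where "g e = (SOME u. u \<in> e \<and> u \<in> S \<and> u \<in> Bs ! j)" for e
  have gp: "g e \<in> e \<and> g e \<in> S \<and> g e \<in> Bs ! j" if "e \<in> M" for e
    unfolding g_def using someI_ex[OF key[OF that]] .
  have inj: "inj_on g M"
  proof
    fix e f assume ef: "e \<in> M" "f \<in> M" "g e = g f"
    have ge: "g e \<in> e" using gp[OF ef(1)] by (rule conjunct1)
    have gf: "g f \<in> f" using gp[OF ef(2)] by (rule conjunct1)
    have "g e \<in> e \<inter> f" using ge gf ef(3) by simp
    moreover have "\<forall>e\<in>M. \<forall>f\<in>M. e \<noteq> f \<longrightarrow> e \<inter> f = {}" using m unfolding matching_def by (rule conjunct2)
    ultimately show "e = f" using ef(1,2) by blast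
  qed
  have fin: "finite (Bs ! j)"
  proof -
    have "Bs ! j \<subseteq> V" using pd_sub[OF pd] j by simp
    then show ?thesis using graph_fin[OF g] by (rule finite_subset)
  qed
  show ?thesis by (rule card_inj_on_le[OF inj _ fin]) (use gp in blast)
qed

lemma main:
  assumes g: "graph V E" and pd: "path_decomposition V E Bs"
  shows "\<exists>ws. vertex_ordering V ws \<and> mw_of_ordering E ws \<le> Max (card ` set Bs)"
proof -
  let ?f = "fidx Bs"
  let ?K = "Max (card ` set Bs)"
  have fV: "finite V" using graph_fin[OF g] .
  obtain ws0 where ws0: "distinct ws0" "set ws0 = V" using finite_distinct_list[OF fV] by blast
  define ws where "ws = sort_key ?f ws0"
  have ws: "distinct ws" "set ws = V" "sorted (map ?f ws)"
    unfolding ws_def using ws0 by (auto simp: distinct_sort)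
  have finE: "finite E" using graph_finite_E[OF g] .
  have bnd: "nu (cut_edges E (set (take i ws))) \<le> ?K" for i
  proof (rule nu_le)
    show "finite (cut_edges E (set (take i ws)))" by (rule finite_subset[OF _ finE]) (unfold cut_edges_def, blast)
  next
    fix M assume m: "matching (cut_edges E (set (take i ws))) M"
    let ?S = "set (take i ws)"
    show "card M \<le> ?K"
    proof (cases "?S = {}")
      case True
      then have "cut_edges E ?S = {}" unfolding cut_edges_def by auto
      then have "M = {}" using m unfolding matching_def by blast
      then show ?thesis by simp
    next
      case False
      define j where "j = Max (?f ` ?S)"
      have jin: "j \<in> ?f ` ?S" unfolding j_def using False by (intro Max_in) auto
      have SV: "?S \<subseteq> V" using ws(2) by (auto dest: in_set_takeD)
      obtain x0 where x0: "x0 \<in> ?S" "j = ?f x0" using jin by blast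
      have "x0 \<in> V" using x0(1) SV by blast
      then have jl: "j < length Bs" using fidx_props[OF pd, of x0] x0(2) by simp
      have lo: "\<forall>u\<in>?S. ?f u \<le> j" unfolding j_def by auto
      have hi: "\<forall>w\<in>V - ?S. j \<le> ?f w"
      proof
        fix w assume w: "w \<in> V - ?S"
        have "set ws = set (take i ws) \<union> set (drop i ws)"
          by (simp only: set_append[symmetric] append_take_drop_id)
        then have dw: "w \<in> set (drop i ws)" using w ws(2) by blast
        have "map ?f (take i ws) @ map ?f (drop i ws) = map ?f ws"
          by (simp only: map_append[symmetric] append_take_drop_id)
        then have so: "sorted (map ?f (take i ws) @ map ?f (drop i ws))"
          using ws(3) by (simp only:)
        have A: "\<forall>a\<in>set (map ?f (take i ws)). \<forall>b\<in>set (map ?f (drop i ws)). a \<le> b"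
          using so[unfolded sorted_append] by (rule conjunct2[THEN conjunct2])
        obtain x where x: "x \<in> ?S" "j = ?f x" using jin by blast
        have fx: "?f x \<in> set (map ?f (take i ws))" using x(1) by simp
        have fw: "?f w \<in> set (map ?f (drop i ws))" using dw by simp
        from A fx fw have "?f x \<le> ?f w" by blast
        then show "j \<le> ?f w" by (simp only: x(2))
      qed
      have "card M \<le> card (Bs ! j)" by (rule cut_bound[OF g pd jl lo hi m])
      also have "\<dots> \<le> ?K"
      proof (rule Max_ge)
        show "finite (card ` set Bs)" by simp
        show "card (Bs ! j) \<in> card ` set Bs" using jl by simp
      qed
      finally show ?thesis .
    qed
  qed
  have mwK: "mw_of_ordering E ws \<le> ?K"
  proof -
    have eq: "{nu (cut_edges E (set (take i ws))) | i. i \<le> length ws}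
      = (\<lambda>i. nu (cut_edges E (set (take i ws)))) ` {..length ws}" by auto
    have "Max ((\<lambda>i. nu (cut_edges E (set (take i ws)))) ` {..length ws}) \<le> ?K"
      by (rule Max.boundedI) (use bnd in auto)
    then show ?thesis unfolding mw_of_ordering_def eq .
  qed
  have "vertex_ordering V ws" using ws(1,2) unfolding vertex_ordering_def by (rule conjI)
  then show ?thesis using mwK by (rule exI[where x=ws, OF conjI])
qed

theorem theorem6:
  fixes V :: "'a set" and E :: "'a set set"
  assumes "graph V E"
  shows "int (matching_width V E) \<le> pathwidth V E + 1"
proof -
  let ?P = "\<lambda>n. \<exists>Bs. path_decomposition V E Bs \<and> Max (card ` set Bs) = n"
  have "path_decomposition V E [V]"
    unfolding path_decomposition_def
  proof (intro conjI ballI allI impI)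
    fix e assume "e \<in> E"
    then show "\<exists>B\<in>set [V]. e \<subseteq> B" using graph_edge_sub[OF assms] by auto
  next
    fix i j k :: nat assume "i \<le> j \<and> j \<le> k \<and> k < length [V]"
    then have "i = 0" "j = 0" "k = 0" by auto
    then show "[V] ! i \<inter> [V] ! k \<subseteq> [V] ! j" by simp
  qed auto
  then have "?P (card V)" by auto
  define n0 where "n0 = (LEAST n. ?P n)"
  have "?P n0" unfolding n0_def by (rule LeastI) fact
  then obtain Bs0 where B0: "path_decomposition V E Bs0" "Max (card ` set Bs0) = n0" by blast
  have minn: "n0 \<le> Max (card ` set Bs)" if "path_decomposition V E Bs" for Bs
    unfolding n0_def using that by (intro Least_le) auto
  have pw: "pathwidth V E = int n0 - 1"
    unfolding pathwidth_def
  proof (rule Least_equality)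
    show "\<exists>Bs. path_decomposition V E Bs \<and> pd_width Bs = int n0 - 1"
      using B0 unfolding pd_width_def by auto
  next
    fix y assume "\<exists>Bs. path_decomposition V E Bs \<and> pd_width Bs = y"
    then obtain Bs where "path_decomposition V E Bs" "pd_width Bs = y" by blast
    then have "n0 \<le> Max (card ` set Bs)" "y = int (Max (card ` set Bs)) - 1"
      using minn unfolding pd_width_def by auto
    then show "int n0 - 1 \<le> y" by linarith
  qed
  obtain ws where ws: "vertex_ordering V ws" "mw_of_ordering E ws \<le> n0"
    using main[OF assms B0(1)] B0(2) by auto
  have "matching_width V E \<le> mw_of_ordering E ws"
    unfolding matching_width_def using ws(1) by (intro Least_le) auto
  then show ?thesis using ws(2) pw by simp
qed

end
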